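(* Let $S$ be a commutative ring and $p,q\in S$. (1) If $c\in V[p,q]$, then there exist $x,y,z\in S$ with $px+qy=-c$ and $xy-z^2=-c^2$; there also exist $x_1,y_1,z_1\in S$ with $px_1+qy_1=c$ and $x_1y_1-z_1^2=-c^2$. (2) If $V[p,q]$ contains a unit of $S$, then there exist $x_2,y_2,z_2\in S$ with $px_2+qy_2=x_2y_2-z_2^2=-1$.
   Context: $V[p,q]=\{pr_1^2+qr_2^2: r_1,r_2\in S\}$. *)

theory Defs
  imports Main
begin

definition V :: "'a::comm_ring_1 \<Rightarrow> 'a \<Rightarrow> 'a set" where
  "V p q = {p * r1^2 + q * r2^2 | r1 r2. True}"

end

theory Submission
  imports Defs
begin

lemma part1:
  fixes p q a b :: "'a::comm_ring_1"
  defines "c \<equiv> p * a^2 + q * b^2"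
  shows "p * (- (a^2) + 2*q*a*b) + q * (- (b^2) - 2*p*a*b) = - c \<and>
         (- (a^2) + 2*q*a*b) * (- (b^2) - 2*p*a*b) - (a*b + p*a^2 - q*b^2)^2 = - (c^2)"
    and "p * (a^2 - 2*q*a*b) + q * (b^2 + 2*p*a*b) = c \<and>
         (a^2 - 2*q*a*b) * (b^2 + 2*p*a*b) - (a*b + p*a^2 - q*b^2)^2 = - (c^2)"
  unfolding c_def by (simp_all add: algebra_simps power2_eq_square)

theorem corollary6p17:
  fixes p q :: "'a::comm_ring_1"
  shows "(\<forall>c \<in> V p q.
            (\<exists>x y z. p * x + q * y = - c \<and> x * y - z^2 = - (c^2)) \<and>
            (\<exists>x1 y1 z1. p * x1 + q * y1 = c \<and> x1 * y1 - z1^2 = - (c^2)))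
       \<and> ((\<exists>u \<in> V p q. u dvd 1) \<longrightarrow>
            (\<exists>x2 y2 z2. p * x2 + q * y2 = -1 \<and> x2 * y2 - z2^2 = -1))"
proof
  have A: "\<forall>c \<in> V p q.
            (\<exists>x y z. p * x + q * y = - c \<and> x * y - z^2 = - (c^2)) \<and>
            (\<exists>x1 y1 z1. p * x1 + q * y1 = c \<and> x1 * y1 - z1^2 = - (c^2))"
  proof
    fix c assume "c \<in> V p q"
    then obtain a b where c: "c = p * a^2 + q * b^2" unfolding V_def by blast
    show "(\<exists>x y z. p * x + q * y = - c \<and> x * y - z^2 = - (c^2)) \<and>
            (\<exists>x1 y1 z1. p * x1 + q * y1 = c \<and> x1 * y1 - z1^2 = - (c^2))"
      using part1[of p a q b] unfolding c by blast
  qed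
  then show "\<forall>c \<in> V p q.
            (\<exists>x y z. p * x + q * y = - c \<and> x * y - z^2 = - (c^2)) \<and>
            (\<exists>x1 y1 z1. p * x1 + q * y1 = c \<and> x1 * y1 - z1^2 = - (c^2))" .
  show "(\<exists>u \<in> V p q. u dvd 1) \<longrightarrow>
            (\<exists>x2 y2 z2. p * x2 + q * y2 = -1 \<and> x2 * y2 - z2^2 = -1)"
  proof
    assume "\<exists>u \<in> V p q. u dvd 1"
    then obtain u v where u: "u \<in> V p q" and uv: "1 = u * v" by (auto elim: dvdE)
    from A u obtain x y z where h: "p * x + q * y = - u" "x * y - z^2 = - (u^2)" by blast
    have "p * (v*x) + q * (v*y) = v * (p*x+q*y)" by (simp add: algebra_simps)
    also have "\<dots> = -1" using h uv by (simp add: algebra_simps)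
    finally have 1: "p * (v*x) + q * (v*y) = -1" .
    have "(v*x) * (v*y) - (v*z)^2 = v^2 * (x*y - z^2)" by (simp add: algebra_simps power2_eq_square)
    also have "\<dots> = v^2 * (- (u^2))" using h by simp
    also have "\<dots> = - ((u*v)^2)" by (simp add: algebra_simps power2_eq_square)
    also have "\<dots> = -1" using uv by simp
    finally show "\<exists>x2 y2 z2. p * x2 + q * y2 = -1 \<and> x2 * y2 - z2^2 = -1" using 1 by blast
  qed
qed

end
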